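(* Let $T$ be a tree with $n\ge 3$ vertices, and let $\delta'$ be the minimum degree of an internal vertex of $T$ (a vertex of degree greater than $1$). Then $$av_1(T)\le 2+\frac{n-\delta'-1}{2}.$$
   Context: For a graph $G=(V,E)$, a set $S\subseteq V$ is a $1$-nearly independent vertex set if the subgraph induced by $S$ has exactly one edge. $\sigma_1(G)$ is the number of such sets, $S_1(G)$ the sum of their sizes, and $av_1(G)=S_1(G)/\sigma_1(G)$. *)

theory Defs
  imports Complex_Main
begin

definition simple_graph :: "'a set \<Rightarrow> 'a set set \<Rightarrow> bool" where
  "simple_graph V E \<longleftrightarrow> finite V \<and> (\<forall>e\<in>E. e \<subseteq> V \<and> card e = 2)"

definition adj :: "'a set set \<Rightarrow> 'a \<Rightarrow> 'a \<Rightarrow> bool" where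
  "adj E u v \<longleftrightarrow> {u, v} \<in> E"

definition connected_graph :: "'a set \<Rightarrow> 'a set set \<Rightarrow> bool" where
  "connected_graph V E \<longleftrightarrow> V \<noteq> {} \<and> (\<forall>u\<in>V. \<forall>v\<in>V. (adj E)\<^sup>*\<^sup>* u v)"

definition is_cycle :: "'a set set \<Rightarrow> 'a list \<Rightarrow> bool" where
  "is_cycle E cs \<longleftrightarrow> length cs \<ge> 3 \<and> distinct cs \<and>
     (\<forall>i < length cs - 1. adj E (cs ! i) (cs ! Suc i)) \<and> adj E (last cs) (hd cs)"

definition acyclic_graph :: "'a set \<Rightarrow> 'a set set \<Rightarrow> bool" where
  "acyclic_graph V E \<longleftrightarrow> \<not> (\<exists>cs. set cs \<subseteq> V \<and> is_cycle E cs)"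

definition is_tree :: "'a set \<Rightarrow> 'a set set \<Rightarrow> bool" where
  "is_tree V E \<longleftrightarrow> simple_graph V E \<and> connected_graph V E \<and> acyclic_graph V E"

definition degree :: "'a set set \<Rightarrow> 'a \<Rightarrow> nat" where
  "degree E v = card {e \<in> E. v \<in> e}"

definition min_internal_degree :: "'a set \<Rightarrow> 'a set set \<Rightarrow> nat" where
  "min_internal_degree V E = Min {degree E v | v. v \<in> V \<and> degree E v > 1}"

definition nearly_indep1 :: "'a set \<Rightarrow> 'a set set \<Rightarrow> 'a set set" where
  "nearly_indep1 V E = {S. S \<subseteq> V \<and> card {e \<in> E. e \<subseteq> S} = 1}"

definition sigma1 :: "'a set \<Rightarrow> 'a set set \<Rightarrow> nat" where
  "sigma1 V E = card (nearly_indep1 V E)"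

definition S1 :: "'a set \<Rightarrow> 'a set set \<Rightarrow> nat" where
  "S1 V E = (\<Sum>S \<in> nearly_indep1 V E. card S)"

definition av1 :: "'a set \<Rightarrow> 'a set set \<Rightarrow> real" where
  "av1 V E = real (S1 V E) / real (sigma1 V E)"

end

theory Submission
  imports Defs
begin

definition Fe :: "'a set \<Rightarrow> 'a set set \<Rightarrow> 'a set \<Rightarrow> 'a set set" where
  "Fe V E e = {S \<in> nearly_indep1 V E. e \<subseteq> S}"

definition Bn :: "'a set \<Rightarrow> 'a set set \<Rightarrow> 'a set \<Rightarrow> 'a set" where
  "Bn V E e = {w \<in> V. \<exists>x\<in>e. {x,w} \<in> E}"

lemma finE: "simple_graph V E \<Longrightarrow> finite E"
proof -
  assume "simple_graph V E"
  then have "E \<subseteq> Pow V" "finite V" unfolding simple_graph_def by auto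
  then show ?thesis using finite_subset by blast
qed

lemma finF: "simple_graph V E \<Longrightarrow> finite (nearly_indep1 V E)"
proof -
  assume "simple_graph V E"
  then have "nearly_indep1 V E \<subseteq> Pow V" "finite V" unfolding simple_graph_def nearly_indep1_def by auto
  then show ?thesis using finite_subset by blast
qed

lemma finFe: "simple_graph V E \<Longrightarrow> finite (Fe V E e)"
  unfolding Fe_def by (rule finite_subset[OF _ finF]) auto

lemma edge_singleton:
  assumes "S \<in> nearly_indep1 V E" "e \<in> E" "e \<subseteq> S"
  shows "{e' \<in> E. e' \<subseteq> S} = {e}"
proof -
  have "card {e' \<in> E. e' \<subseteq> S} = 1" using assms(1) unfolding nearly_indep1_def by auto
  then obtain a where a: "{e' \<in> E. e' \<subseteq> S} = {a}" by (rule card_1_singletonE)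
  moreover have "e \<in> {e' \<in> E. e' \<subseteq> S}" using assms(2,3) by simp
  ultimately show ?thesis by simp
qed

lemma sum_split:
  assumes sg: "simple_graph V E"
  shows "(\<Sum>S\<in>nearly_indep1 V E. g S) = (\<Sum>e\<in>E. \<Sum>S\<in>Fe V E e. (g S :: real))"
proof -
  have fE: "finite E" using finE[OF sg] .
  have fF: "finite (nearly_indep1 V E)" using finF[OF sg] .
  have "(\<Sum>S\<in>nearly_indep1 V E. g S) = (\<Sum>S\<in>nearly_indep1 V E. \<Sum>e\<in>E. if e \<subseteq> S then g S else 0)"
  proof (rule sum.cong)
    fix S assume S: "S \<in> nearly_indep1 V E"
    have "card {e' \<in> E. e' \<subseteq> S} = 1" using S unfolding nearly_indep1_def by auto
    then obtain a where a: "{e' \<in> E. e' \<subseteq> S} = {a}" by (rule card_1_singletonE)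
    have "(\<Sum>e\<in>E. if e \<subseteq> S then g S else 0) = (\<Sum>e\<in>{e' \<in> E. e' \<subseteq> S}. g S)"
      using sum.inter_filter[OF fE, of "\<lambda>_. g S" "\<lambda>e. e \<subseteq> S"] by simp
    also have "\<dots> = g S" using a by simp
    finally show "g S = (\<Sum>e\<in>E. if e \<subseteq> S then g S else 0)" by simp
  qed simp
  also have "\<dots> = (\<Sum>e\<in>E. \<Sum>S\<in>nearly_indep1 V E. if e \<subseteq> S then g S else 0)"
    by (rule sum.swap)
  also have "\<dots> = (\<Sum>e\<in>E. \<Sum>S\<in>Fe V E e. g S)"
  proof (rule sum.cong)
    fix e assume "e \<in> E"
    show "(\<Sum>S\<in>nearly_indep1 V E. if e \<subseteq> S then g S else 0) = (\<Sum>S\<in>Fe V E e. g S)"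
      unfolding Fe_def using sum.inter_filter[OF fF, of g "\<lambda>S. e \<subseteq> S"] by simp
  qed simp
  finally show ?thesis .
qed

lemma e_in_Bn:
  assumes sg: "simple_graph V E" and e: "e \<in> E"
  shows "e \<subseteq> Bn V E e"
proof
  fix w assume w: "w \<in> e"
  obtain a b where ab: "e = {a,b}" "a \<noteq> b" using sg e unfolding simple_graph_def
    by (meson card_2_iff)
  have "e \<subseteq> V" using sg e unfolding simple_graph_def by auto
  then show "w \<in> Bn V E e" unfolding Bn_def using w ab e
    by (auto intro!: bexI[of _ a] bexI[of _ b] simp: insert_commute)
qed

lemma card_S:
  assumes sg: "simple_graph V E" and e: "e \<in> E" and S: "S \<in> Fe V E e"
  shows "card S = 2 + card (S \<inter> (V - Bn V E e))"
proof -
  have SV: "S \<subseteq> V" and eS: "e \<subseteq> S" and SF: "S \<in> nearly_indep1 V E"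
    using S unfolding Fe_def nearly_indep1_def by auto
  have one: "{e' \<in> E. e' \<subseteq> S} = {e}" using edge_singleton[OF SF e eS] .
  have "S \<inter> Bn V E e \<subseteq> e"
  proof
    fix w assume w: "w \<in> S \<inter> Bn V E e"
    then obtain x where x: "x \<in> e" "{x,w} \<in> E" unfolding Bn_def by auto
    have "{x,w} \<subseteq> S" using x w eS by auto
    then have "{x,w} \<in> {e' \<in> E. e' \<subseteq> S}" using x(2) unfolding mem_Collect_eq by (rule conjI[rotated])
    then have "{x,w} \<in> {e}" by (simp only: one)
    then have "{x,w} = e" by (simp only: singleton_iff)
    then show "w \<in> e" by blast
  qed
  then have eq: "S = e \<union> (S \<inter> (V - Bn V E e))" using e_in_Bn[OF sg e] eS SV by auto
  have fS: "finite S" using SV sg unfolding simple_graph_def using finite_subset by blast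
  have ce: "card e = 2" using sg e unfolding simple_graph_def by auto
  have "card (e \<union> (S \<inter> (V - Bn V E e))) = card e + card (S \<inter> (V - Bn V E e))"
    apply (rule card_Un_disjoint)
    using fS e_in_Bn[OF sg e] eS by (auto intro: finite_subset)
  moreover have "card S = card (e \<union> (S \<inter> (V - Bn V E e)))" using eq by (rule arg_cong)
  ultimately show ?thesis using ce by linarith
qed

lemma half_bound:
  assumes sg: "simple_graph V E" and e: "e \<in> E" and x: "x \<in> V - Bn V E e"
  shows "2 * card {S \<in> Fe V E e. x \<in> S} \<le> card (Fe V E e)"
proof -
  let ?A = "{S \<in> Fe V E e. x \<in> S}" and ?B = "{S \<in> Fe V E e. x \<notin> S}"
  have xe: "x \<notin> e" using x e_in_Bn[OF sg e] by auto
  have inj: "inj_on (\<lambda>S. S - {x}) ?A" by (rule inj_onI) blast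
  have img: "(\<lambda>S. S - {x}) ` ?A \<subseteq> ?B"
  proof
    fix T assume "T \<in> (\<lambda>S. S - {x}) ` ?A"
    then obtain S where S: "S \<in> Fe V E e" "x \<in> S" and T: "T = S - {x}" by auto
    have SV: "S \<subseteq> V" and eS: "e \<subseteq> S" and SF: "S \<in> nearly_indep1 V E"
      using S unfolding Fe_def nearly_indep1_def by auto
    have one: "{e' \<in> E. e' \<subseteq> S} = {e}" using edge_singleton[OF SF e eS] .
    have eT: "e \<subseteq> T" using eS xe T by auto
    have "{e' \<in> E. e' \<subseteq> T} = {e}" using one eT e T by auto
    then have "T \<in> nearly_indep1 V E" using SV T unfolding nearly_indep1_def by auto
    then show "T \<in> ?B" using eT T unfolding Fe_def by auto
  qed
  have fB: "finite ?B" using finFe[OF sg] by auto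
  have le: "card ?A \<le> card ?B" using card_inj_on_le[OF inj img fB] .
  have "Fe V E e = ?A \<union> ?B" by blast
  then have "card (Fe V E e) = card (?A \<union> ?B)" by simp
  also have "\<dots> = card ?A + card ?B" by (rule card_Un_disjoint) (use finFe[OF sg] in auto)
  finally show ?thesis using le by simp
qed


lemma card_filter_sum:
  assumes "finite A"
  shows "card {x \<in> A. P x} = (\<Sum>x\<in>A. if P x then 1 else (0::nat))"
  using sum.inter_filter[OF assms, of "\<lambda>_. (1::nat)" P] by simp

lemma per_edge_nat:
  assumes sg: "simple_graph V E" and e: "e \<in> E"
  shows "2 * (\<Sum>S\<in>Fe V E e. card S) \<le> 4 * card (Fe V E e) + card (V - Bn V E e) * card (Fe V E e)"
proof -
  define W where "W = V - Bn V E e"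
  define F where "F = Fe V E e"
  have fW: "finite W" using sg unfolding W_def simple_graph_def by auto
  have fF: "finite F" using finFe[OF sg] unfolding F_def .
  have "(\<Sum>S\<in>F. card S) = (\<Sum>S\<in>F. 2 + (\<Sum>x\<in>W. if x \<in> S then 1 else 0))"
  proof (rule sum.cong)
    fix S assume S: "S \<in> F"
    have "card S = 2 + card (S \<inter> W)" using card_S[OF sg e] S unfolding F_def W_def by blast
    moreover have "S \<inter> W = {x \<in> W. x \<in> S}" by blast
    ultimately show "card S = 2 + (\<Sum>x\<in>W. if x \<in> S then 1 else 0)"
      using card_filter_sum[OF fW, of "\<lambda>x. x \<in> S"] by simp
  qed simp
  also have "\<dots> = 2 * card F + (\<Sum>S\<in>F. \<Sum>x\<in>W. if x \<in> S then 1 else 0)"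
    by (subst sum.distrib) simp
  also have "(\<Sum>S\<in>F. \<Sum>x\<in>W. if x \<in> S then 1 else (0::nat)) = (\<Sum>x\<in>W. \<Sum>S\<in>F. if x \<in> S then 1 else 0)"
    by (rule sum.swap)
  also have "\<dots> = (\<Sum>x\<in>W. card {S \<in> F. x \<in> S})"
    using card_filter_sum[OF fF] by simp
  finally have eq: "(\<Sum>S\<in>F. card S) = 2 * card F + (\<Sum>x\<in>W. card {S \<in> F. x \<in> S})" .
  have "2 * (\<Sum>x\<in>W. card {S \<in> F. x \<in> S}) = (\<Sum>x\<in>W. 2 * card {S \<in> F. x \<in> S})"
    by (simp add: sum_distrib_left)
  also have "\<dots> \<le> (\<Sum>x\<in>W. card F)"
    by (rule sum_mono) (use half_bound[OF sg e] in \<open>auto simp: W_def F_def\<close>)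
  also have "\<dots> = card W * card F" by simp
  finally have "2 * (\<Sum>x\<in>W. card {S \<in> F. x \<in> S}) \<le> card W * card F" .
  then show ?thesis using eq unfolding F_def[symmetric] W_def[symmetric] by linarith
qed

lemma nbr_card:
  assumes sg: "simple_graph V E"
  shows "card {w. {u,w} \<in> E} = degree E u"
proof -
  have "bij_betw (\<lambda>w. {u,w}) {w. {u,w} \<in> E} {e \<in> E. u \<in> e}"
  proof (rule bij_betwI')
    fix x y assume x: "x \<in> {w. {u,w} \<in> E}" and y: "y \<in> {w. {u,w} \<in> E}"
    have "card {u,x} = 2" "card {u,y} = 2" using x y sg unfolding simple_graph_def by auto
    then have "x \<noteq> u" "y \<noteq> u" by auto
    then show "({u,x} = {u,y}) = (x = y)" by (auto simp: doubleton_eq_iff)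
  next
    fix x assume "x \<in> {w. {u,w} \<in> E}" then show "{u,x} \<in> {e \<in> E. u \<in> e}" by simp
  next
    fix e assume e: "e \<in> {e \<in> E. u \<in> e}"
    then have "card e = 2" using sg unfolding simple_graph_def by auto
    then obtain a b where ab: "e = {a,b}" "a \<noteq> b" by (meson card_2_iff)
    then have "e = {u,b} \<or> e = {u,a}" using e by auto
    then show "\<exists>x\<in>{w. {u,w} \<in> E}. e = {u,x}" using e by auto
  qed
  then show ?thesis unfolding degree_def by (rule bij_betw_same_card)
qed

lemma Bn_card:
  assumes sg: "simple_graph V E" and uv: "{u,v} \<in> E"
  shows "degree E u + 1 \<le> card (Bn V E {u,v})"
proof -
  let ?N = "{w. {u,w} \<in> E}"
  have sub: "insert u ?N \<subseteq> Bn V E {u,v}"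
  proof
    fix w assume w: "w \<in> insert u ?N"
    show "w \<in> Bn V E {u,v}"
    proof (cases "w = u")
      case True
      then show ?thesis using e_in_Bn[OF sg uv] by auto
    next
      case False
      then have "{u,w} \<in> E" using w by auto
      moreover then have "w \<in> V" using sg unfolding simple_graph_def by auto
      ultimately show ?thesis unfolding Bn_def by auto
    qed
  qed
  have un: "u \<notin> ?N"
  proof
    assume "u \<in> ?N"
    then have "{u} \<in> E" by simp
    then show False using sg unfolding simple_graph_def by fastforce
  qed
  have fB: "finite (Bn V E {u,v})" using sg unfolding simple_graph_def Bn_def by auto
  have fN: "finite ?N" using finite_subset[OF _ fB] sub by blast
  have "card (insert u ?N) = degree E u + 1" using un fN nbr_card[OF sg, of u] by simp
  then show ?thesis using card_mono[OF fB sub] by simp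
qed


lemma internal_endpoint:
  assumes tree: "is_tree V E" and n: "card V \<ge> 3" and uv: "{u,v} \<in> E"
  shows "degree E u > 1 \<or> degree E v > 1"
proof (rule ccontr)
  assume "\<not> ?thesis"
  then have du: "degree E u \<le> 1" and dv: "degree E v \<le> 1" by auto
  have sg: "simple_graph V E" and con: "connected_graph V E" using tree unfolding is_tree_def by auto
  have fE: "finite E" using finE[OF sg] .
  have single: "{e \<in> E. x \<in> e} = {{u,v}}" if x: "x \<in> {u,v}" for x
  proof -
    have dx: "card {e \<in> E. x \<in> e} \<le> Suc 0" using du dv x unfolding degree_def by auto
    have fx: "finite {e \<in> E. x \<in> e}" using fE by auto
    have mem: "{u,v} \<in> {e \<in> E. x \<in> e}" using uv x by auto
    have "card {e \<in> E. x \<in> e} \<noteq> 0" using fx mem by auto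
    then have "card {e \<in> E. x \<in> e} = 1" using dx by linarith
    then obtain a where a: "{e \<in> E. x \<in> e} = {a}" by (rule card_1_singletonE)
    then have "a = {u,v}" using mem by simp
    then show ?thesis using a by simp
  qed
  have reach: "y \<in> {u,v}" if "(adj E)\<^sup>*\<^sup>* u y" for y
    using that
  proof (induction rule: rtranclp_induct)
    case base then show ?case by simp
  next
    case (step y z)
    then have "{y,z} \<in> {e \<in> E. y \<in> e}" unfolding adj_def by simp
    then have "{y,z} \<in> {{u,v}}" using single[OF step.IH] by simp
    then have "{y,z} = {u,v}" by simp
    then show ?case by blast
  qed
  have uV: "u \<in> V" using uv sg unfolding simple_graph_def by auto
  have "V \<subseteq> {u,v}"
  proof
    fix y assume "y \<in> V"
    then have "(adj E)\<^sup>*\<^sup>* u y" using con uV unfolding connected_graph_def by blast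
    then show "y \<in> {u,v}" using reach by blast
  qed
  then have "card V \<le> card {u,v}" by (simp add: card_mono)
  also have "\<dots> \<le> 2" by (simp add: card_insert_le_m1)
  finally show False using n by simp
qed

lemma edge_bound:
  assumes tree: "is_tree V E" and n: "card V \<ge> 3" and e: "e \<in> E"
  shows "real (card (V - Bn V E e)) \<le> real (card V) - real (min_internal_degree V E) - 1"
proof -
  have sg: "simple_graph V E" using tree unfolding is_tree_def by auto
  have fV: "finite V" using sg unfolding simple_graph_def by auto
  obtain u v where ab: "e = {u,v}" "u \<noteq> v" using sg e unfolding simple_graph_def by (meson card_2_iff)
  have "\<exists>a b. e = {a,b} \<and> degree E a > 1"
  proof (cases "degree E u > 1")
    case True then show ?thesis using ab by blast
  next
    case False
    then have "degree E v > 1" using internal_endpoint[OF tree n, of u v] e ab by auto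
    then show ?thesis using ab by (auto simp: insert_commute)
  qed
  then obtain a b where abe: "e = {a,b}" and da: "degree E a > 1" by blast
  have aV: "a \<in> V" using e abe sg unfolding simple_graph_def by auto
  have fin: "finite {degree E v | v. v \<in> V \<and> degree E v > 1}" using fV by simp
  have "min_internal_degree V E \<le> degree E a"
    unfolding min_internal_degree_def by (rule Min_le[OF fin]) (use aV da in blast)
  moreover have "degree E a + 1 \<le> card (Bn V E e)" using Bn_card[OF sg, of a b] e abe by simp
  moreover have "Bn V E e \<subseteq> V" unfolding Bn_def by auto
  moreover then have "card (V - Bn V E e) = card V - card (Bn V E e)" using fV
    by (meson card_Diff_subset finite_subset)
  moreover have "card (Bn V E e) \<le> card V" using fV \<open>Bn V E e \<subseteq> V\<close> card_mono by blast
  ultimately show ?thesis by linarith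
qed

theorem mainTheorem10:
  fixes V :: "'a set" and E :: "'a set set"
  assumes "is_tree V E"
    and "card V \<ge> 3"
  shows "av1 V E \<le> 2 + (real (card V) - real (min_internal_degree V E) - 1) / 2"
proof -
  define c where "c = 2 + (real (card V) - real (min_internal_degree V E) - 1) / 2"
  have sg: "simple_graph V E" using assms(1) unfolding is_tree_def by auto
  have con: "connected_graph V E" using assms(1) unfolding is_tree_def by auto
  have fV: "finite V" using sg unfolding simple_graph_def by auto
  have fF: "finite (nearly_indep1 V E)" using finF[OF sg] .
  obtain u w where uw: "u \<in> V" "w \<in> V" "u \<noteq> w"
  proof -
    have "card V \<ge> 2" using assms(2) by simp
    then obtain A where "A \<subseteq> V" "card A = 2" by (meson obtain_subset_with_card_n)
    then obtain x y where "A = {x,y}" "x \<noteq> y" by (meson card_2_iff)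
    then show ?thesis using that \<open>A \<subseteq> V\<close> by auto
  qed
  have "(adj E)\<^sup>*\<^sup>* u w" using con uw unfolding connected_graph_def by blast
  then obtain y where "adj E u y" using uw(3) by (metis converse_rtranclpE)
  then have e0: "{u,y} \<in> E" unfolding adj_def .
  have e0F: "{u,y} \<in> nearly_indep1 V E"
  proof -
    have sub: "{u,y} \<subseteq> V" and c2: "card {u,y} = 2" using e0 sg unfolding simple_graph_def by auto
    have "{e' \<in> E. e' \<subseteq> {u,y}} = {{u,y}}"
    proof (intro equalityI subsetI)
      fix x assume x: "x \<in> {e' \<in> E. e' \<subseteq> {u,y}}"
      then have "card x = 2" "x \<subseteq> {u,y}" using sg unfolding simple_graph_def by auto
      then have "x = {u,y}" using c2 by (metis card_subset_eq finite.emptyI finite.insertI)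
      then show "x \<in> {{u,y}}" by simp
    next
      fix x assume "x \<in> {{u,y}}" then show "x \<in> {e' \<in> E. e' \<subseteq> {u,y}}" using e0 by simp
    qed
    then show ?thesis using sub unfolding nearly_indep1_def by simp
  qed
  have sigpos: "sigma1 V E > 0" unfolding sigma1_def using fF e0F card_gt_0_iff by blast
  have per: "(\<Sum>S\<in>Fe V E e. real (card S)) \<le> c * real (card (Fe V E e))" if e: "e \<in> E" for e
  proof -
    have h1: "2 * (\<Sum>S\<in>Fe V E e. card S) \<le> 4 * card (Fe V E e) + card (V - Bn V E e) * card (Fe V E e)"
      using per_edge_nat[OF sg e] .
    then have h1r: "2 * real (\<Sum>S\<in>Fe V E e. card S) \<le> 4 * real (card (Fe V E e)) + real (card (V - Bn V E e)) * real (card (Fe V E e))"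
      by (metis (mono_tags, lifting) of_nat_add of_nat_le_iff of_nat_mult of_nat_numeral)
    have h2: "real (card (V - Bn V E e)) * real (card (Fe V E e)) \<le> (real (card V) - real (min_internal_degree V E) - 1) * real (card (Fe V E e))"
      by (rule mult_right_mono[OF edge_bound[OF assms e]]) simp
    have "(\<Sum>S\<in>Fe V E e. real (card S)) = real (\<Sum>S\<in>Fe V E e. card S)" by simp
    moreover have "c * real (card (Fe V E e)) = 2 * real (card (Fe V E e)) + ((real (card V) - real (min_internal_degree V E) - 1) * real (card (Fe V E e))) / 2"
      unfolding c_def by (simp add: algebra_simps add_divide_distrib)
    ultimately show ?thesis using h1r h2 by linarith
  qed
  have "real (S1 V E) = (\<Sum>S\<in>nearly_indep1 V E. real (card S))" unfolding S1_def by simp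
  also have "\<dots> = (\<Sum>e\<in>E. \<Sum>S\<in>Fe V E e. real (card S))" by (rule sum_split[OF sg])
  also have "\<dots> \<le> (\<Sum>e\<in>E. c * real (card (Fe V E e)))" by (rule sum_mono) (rule per)
  also have "\<dots> = c * (\<Sum>e\<in>E. \<Sum>S\<in>Fe V E e. (1::real))" by (simp add: sum_distrib_left)
  also have "(\<Sum>e\<in>E. \<Sum>S\<in>Fe V E e. (1::real)) = (\<Sum>S\<in>nearly_indep1 V E. (1::real))"
    by (rule sum_split[OF sg, symmetric])
  also have "\<dots> = real (sigma1 V E)" unfolding sigma1_def by simp
  finally have "real (S1 V E) \<le> c * real (sigma1 V E)" .
  then have "av1 V E \<le> c" unfolding av1_def using sigpos by (simp add: pos_divide_le_eq)
  then show ?thesis unfolding c_def .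
qed

end
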